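(* Let $a>0$, $\epsilon>0$, $n\in\mathbb{N}$, $\sigma_n=n^{-a}$, and let $A_n(q_1,\dot q_1)=\frac12|\dot q_1|^2+\sigma_n(1-\cos q_1)$ on $\mathbb{R}$. Let $t_0<t_2$ and $\bar t_1,\tilde t_1\in(t_0,t_2)$. Let $\bar q_1$ be a solution of the Euler–Lagrange equation of $A_n$ on $(t_0,\bar t_1)$ and on $(\bar t_1,t_2)$ with $\bar q_1(t_0)=0$, $\bar q_1(\bar t_1)=\pi$, $\bar q_1(t_2)=2\pi$, and let $\tilde q_1$ be a solution of the Euler–Lagrange equation of $A_n$ on $(t_0,\tilde t_1)$ and on $(\tilde t_1,t_2)$ with $\tilde q_1(t_0)=0$, $\tilde q_1(\tilde t_1)=\pi$, $\tilde q_1(t_2)=2\pi$. Let $\bar\omega_1'=\pi/(\bar t_1-t_0)$, $\bar\omega_1''=\pi/(t_2-\bar t_1)$, $\tilde\omega_1'=\pi/(\tilde t_1-t_0)$, $\tilde\omega_1''=\pi/(t_2-\tilde t_1)$ be the corresponding average speeds and $|\omega_1|=\max\{|\bar\omega_1'|,|\bar\omega_1''|,|\tilde\omega_1'|,|\tilde\omega_1''|\}$. If $|\omega_1|<n^{-\frac a2-\epsilon}$, then $$\Big|\int_{t_0}^{t_2}A_n(\bar q_1,\dot{\bar q}_1)\,dt-\int_{t_0}^{t_2}A_n(\tilde q_1,\dot{\tilde q}_1)\,dt\Big|\le C_1|\bar t_1-\tilde t_1|\,\sigma_n\exp\Big(-\frac{C_2\sqrt{\sigma_n}}{|\omega_1|}\Big),$$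 where $C_1,C_2$ are positive constants independent of $n$. *)

theory Defs
  imports "HOL-Analysis.Analysis"
begin

definition sigma :: "real \<Rightarrow> nat \<Rightarrow> real" where
  "sigma a n = real n powr (- a)"

definition lagr :: "real \<Rightarrow> real \<Rightarrow> real \<Rightarrow> real" where
  "lagr s x v = v\<^sup>2 / 2 + s * (1 - cos x)"

definition EL_sol :: "real \<Rightarrow> (real \<Rightarrow> real) \<Rightarrow> real \<Rightarrow> real \<Rightarrow> bool" where
  "EL_sol s q t t' \<longleftrightarrow>
     (\<forall>x\<in>{t<..<t'}. (q has_real_derivative deriv q x) (at x) \<and>
                    (deriv q has_real_derivative (s * sin (q x))) (at x))"

text \<open>Action on [t0,t2]; the derivative at the finitely many corner points is irrelevant.\<close>
definition action :: "real \<Rightarrow> (real \<Rightarrow> real) \<Rightarrow> real \<Rightarrow> real \<Rightarrow> real" where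
  "action s q t0 t2 = integral {t0..t2} (\<lambda>t. lagr s (q t) (deriv q t))"

end

theory Submission
  imports Defs
begin


lemma cos_lower_aux:
  fixes x :: real assumes x: "0 \<le> x"
  shows "x\<^sup>2/2 - x^4/24 \<le> 1 - cos x"
proof -
  have g2: "0 \<le> y\<^sup>2/2 - (1 - cos y)" if "0 \<le> y" for y :: real
  proof -
    have "(\<lambda>y. y\<^sup>2/2 - (1 - cos y)) 0 \<le> (\<lambda>y. y\<^sup>2/2 - (1 - cos y)) y"
    proof (rule DERIV_nonneg_imp_nondecreasing[OF that])
      fix u :: real assume "0 \<le> u" "u \<le> y"
      have "((\<lambda>y. y\<^sup>2/2 - (1 - cos y)) has_real_derivative (u - sin u)) (at u)"
        by (rule derivative_eq_intros refl | simp)+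
      moreover have "u - sin u \<ge> 0" using sin_x_le_x[OF \<open>0 \<le> u\<close>] by simp
      ultimately show "\<exists>d. ((\<lambda>y. y\<^sup>2/2 - (1 - cos y)) has_real_derivative d) (at u) \<and> d \<ge> 0" by blast
    qed
    then show ?thesis by simp
  qed
  have g3: "0 \<le> sin y - y + y^3/6" if "0 \<le> y" for y :: real
  proof -
    have "(\<lambda>y. sin y - y + y^3/6) 0 \<le> (\<lambda>y. sin y - y + y^3/6) y"
    proof (rule DERIV_nonneg_imp_nondecreasing[OF that])
      fix u :: real assume "0 \<le> u" "u \<le> y"
      have "((\<lambda>y. sin y - y + y^3/6) has_real_derivative (cos u - 1 + u\<^sup>2/2)) (at u)"
        by (rule derivative_eq_intros refl | simp add: power2_eq_square)+
      moreover have "cos u - 1 + u\<^sup>2/2 \<ge> 0" using g2[OF \<open>0 \<le> u\<close>] by simp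
      ultimately show "\<exists>d. ((\<lambda>y. sin y - y + y^3/6) has_real_derivative d) (at u) \<and> d \<ge> 0" by blast
    qed
    then show ?thesis by simp
  qed
  have "(\<lambda>y. (1 - cos y) - y\<^sup>2/2 + y^4/24) 0 \<le> (\<lambda>y. (1 - cos y) - y\<^sup>2/2 + y^4/24) x"
  proof (rule DERIV_nonneg_imp_nondecreasing[OF x])
    fix u :: real assume "0 \<le> u" "u \<le> x"
    have "((\<lambda>y. (1 - cos y) - y\<^sup>2/2 + y^4/24) has_real_derivative (sin u - u + u^3/6)) (at u)"
      by (rule derivative_eq_intros refl | simp add: power3_eq_cube)+
    moreover have "sin u - u + u^3/6 \<ge> 0" using g3[OF \<open>0 \<le> u\<close>] by simp
    ultimately show "\<exists>d. ((\<lambda>y. (1 - cos y) - y\<^sup>2/2 + y^4/24) has_real_derivative d) (at u) \<and> d \<ge> 0" by blast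
  qed
  then show ?thesis by simp
qed

lemma cos_lower:
  fixes x :: real assumes "0 \<le> x" "x \<le> pi"
  shows "x\<^sup>2/12 \<le> 1 - cos x"
proof -
  have p: "pi \<le> 3.15" using pi_approx by simp
  have "x\<^sup>2 \<le> pi\<^sup>2" using assms by (intro power_mono) auto
  also have "pi\<^sup>2 \<le> 3.15\<^sup>2" using p pi_gt3 by (intro power_mono) auto
  finally have "x\<^sup>2 \<le> 3.15\<^sup>2" .
  then have x10: "x\<^sup>2 \<le> 10" by (simp add: power2_eq_square)
  have "x^4 = x\<^sup>2 * x\<^sup>2" by (simp add: power4_eq_xxxx power2_eq_square)
  also have "\<dots> \<le> 10 * x\<^sup>2" using x10 by (intro mult_right_mono) auto
  finally have "x^4 \<le> 10 * x\<^sup>2" .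
  then have "x\<^sup>2/12 \<le> x\<^sup>2/2 - x^4/24" by simp
  with cos_lower_aux[OF assms(1)] show ?thesis by simp
qed



definition FF :: "real \<Rightarrow> real \<Rightarrow> real \<Rightarrow> real" where
  "FF s h x = sqrt (2 * (h + s * (1 - cos x)))"

lemma FF_pos: "s \<ge> 0 \<Longrightarrow> h > 0 \<Longrightarrow> FF s h x > 0"
  unfolding FF_def by (intro real_sqrt_gt_zero) (simp add: add_pos_nonneg)

lemma FF_sq: "s \<ge> 0 \<Longrightarrow> h > 0 \<Longrightarrow> (FF s h x)\<^sup>2 = 2 * (h + s * (1 - cos x))"
  unfolding FF_def by (simp add: add_pos_nonneg less_imp_le)

lemma FF_cont: "continuous_on A (FF s h)"
  unfolding FF_def by (intro continuous_intros)

lemma FF_inv_cont: "s \<ge> 0 \<Longrightarrow> h > 0 \<Longrightarrow> continuous_on A (\<lambda>x. 1 / FF s h x)"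
  by (intro continuous_intros FF_cont) (metis FF_pos less_irrefl)

lemma pointwise_cmp:
  fixes a b h h' v :: real
  assumes "a > 0" "b > 0" "a\<^sup>2 = 2*(h+v)" "b\<^sup>2 = 2*(h'+v)"
  shows "b - h' * (1/a) \<le> a - h * (1/a)"
proof -
  have "a\<^sup>2 - b\<^sup>2 = 2*(h - h')" using assms by simp
  then have e: "h = h' + (a\<^sup>2 - b\<^sup>2)/2" by (simp add: field_simps)
  have "(a - h*(1/a)) - (b - h'*(1/a)) = (a - b)\<^sup>2 / (2*a)"
    using assms(1) unfolding e by (simp add: divide_simps) (simp add: algebra_simps power2_eq_square)
  moreover have "(a - b)\<^sup>2 / (2*a) \<ge> 0" using assms(1) by simp
  ultimately show ?thesis by linarith
qed

lemma compare:
  assumes s: "s \<ge> 0" and h: "h > 0" "h' > 0" and cd: "c \<le> d"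
  shows "integral {c..d} (FF s h') - h' * integral {c..d} (\<lambda>x. 1 / FF s h x)
       \<le> integral {c..d} (FF s h) - h * integral {c..d} (\<lambda>x. 1 / FF s h x)"
proof -
  have i1: "(FF s h has_integral integral {c..d} (FF s h)) {c..d}"
     "(FF s h' has_integral integral {c..d} (FF s h')) {c..d}"
    by (auto intro!: integrable_integral integrable_continuous_real FF_cont)
  have i2: "((\<lambda>x. 1 / FF s h x) has_integral integral {c..d} (\<lambda>x. 1 / FF s h x)) {c..d}"
    by (auto intro!: integrable_integral integrable_continuous_real FF_inv_cont s h)
  show ?thesis
    apply (rule has_integral_le[OF has_integral_diff[OF i1(2) has_integral_mult_right[OF i2]]
                                   has_integral_diff[OF i1(1) has_integral_mult_right[OF i2]]])
    apply (rule pointwise_cmp[OF FF_pos[OF s h(1)] FF_pos[OF s h(2)] FF_sq[OF s h(1)] FF_sq[OF s h(2)]])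
    done
qed

lemma pair_bound:
  assumes s: "s \<ge> 0" and h: "h > 0" "h' > 0" and cd: "c \<le> d"
    and T: "T = integral {c..d} (\<lambda>x. 1 / FF s h x)" and T': "T' = integral {c..d} (\<lambda>x. 1 / FF s h' x)"
  shows "\<bar>(integral {c..d} (FF s h) - h * T) - (integral {c..d} (FF s h') - h' * T')\<bar>
        \<le> max h h' * \<bar>T - T'\<bar>"
proof -
  have 1: "integral {c..d} (FF s h') - h' * T \<le> integral {c..d} (FF s h) - h * T"
    using compare[OF s h cd] T by simp
  have 2: "integral {c..d} (FF s h) - h * T' \<le> integral {c..d} (FF s h') - h' * T'"
    using compare[OF s h(2) h(1) cd] T' by simp
  have l: "h' * (T' - T) \<le> (integral {c..d} (FF s h) - h * T) - (integral {c..d} (FF s h') - h' * T')"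
    using 1 by (simp add: algebra_simps)
  have u: "(integral {c..d} (FF s h) - h * T) - (integral {c..d} (FF s h') - h' * T') \<le> h * (T' - T)"
    using 2 by (simp add: algebra_simps)
  have a: "\<bar>h' * (T' - T)\<bar> \<le> max h h' * \<bar>T - T'\<bar>" "\<bar>h * (T' - T)\<bar> \<le> max h h' * \<bar>T - T'\<bar>"
    using h by (auto simp: abs_mult abs_minus_commute intro!: mult_right_mono)
  show ?thesis using l u a by linarith
qed



lemma P_deriv:
  fixes k H y :: real
  assumes k: "k > 0" and H: "H > 0"
  shows "((\<lambda>y. ln (k*y + sqrt ((k*y)\<^sup>2 + 2*H))) has_real_derivative k / sqrt ((k*y)\<^sup>2 + 2*H)) (at y)"
proof -
  define r where "r = sqrt ((k*y)\<^sup>2 + 2*H)"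
  have r: "r > 0" unfolding r_def using H by (intro real_sqrt_gt_zero) (simp add: add_nonneg_pos)
  have "\<bar>k*y\<bar> = sqrt ((k*y)\<^sup>2)" by simp
  also have "\<dots> < r" unfolding r_def using H by (intro real_sqrt_less_mono) simp
  finally have kr: "k*y + r > 0" by linarith
  have rr: "r\<^sup>2 = (k*y)\<^sup>2 + 2*H" unfolding r_def using H by (simp add: add_nonneg_pos less_imp_le)
  have ds: "((\<lambda>y. (k*y)\<^sup>2 + 2*H) has_real_derivative (2*(k*y)*k)) (at y)"
    by (auto intro!: derivative_eq_intros)
  have sq: "((\<lambda>y. sqrt ((k*y)\<^sup>2 + 2*H)) has_real_derivative (inverse r / 2 * (2*(k*y)*k))) (at y)"
    using DERIV_chain2[OF DERIV_real_sqrt ds] r H unfolding r_def by (simp add: add_nonneg_pos)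
  have dg: "((\<lambda>y. k*y + sqrt ((k*y)\<^sup>2 + 2*H)) has_real_derivative (k + inverse r / 2 * (2*(k*y)*k))) (at y)"
    by (intro DERIV_add sq) (auto intro!: derivative_eq_intros)
  have "((\<lambda>y. ln (k*y + sqrt ((k*y)\<^sup>2 + 2*H))) has_real_derivative
        inverse (k*y + r) * (k + inverse r / 2 * (2*(k*y)*k))) (at y)"
    using DERIV_chain2[OF DERIV_ln[OF kr[unfolded r_def]] dg] unfolding r_def by simp
  moreover have "inverse (k*y + r) * (k + inverse r / 2 * (2*(k*y)*k)) = k / r"
  proof -
    have "k + inverse r / 2 * (2*(k*y)*k) = k * (k*y + r) / r" using r by (simp add: field_simps)
    then show ?thesis using kr by simp
  qed
  ultimately show ?thesis unfolding r_def by simp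
qed

lemma one_minus_cos_ge:
  assumes c: "c = 0 \<or> c = pi" and x: "x \<in> {c..c+pi}"
  shows "(if c = 0 then x else 2*pi - x)\<^sup>2 / 12 \<le> 1 - cos x"
proof (cases "c = 0")
  case True then show ?thesis using x cos_lower[of x] by auto
next
  case False
  then have "c = pi" using c by auto
  then have "0 \<le> 2*pi - x" "2*pi - x \<le> pi" using x by auto
  from cos_lower[OF this] False show ?thesis by (simp add: cos_diff)
qed

lemma expbound:
  assumes s: "s > 0" and H: "H > 0" and c: "c = 0 \<or> c = pi"
    and T: "((\<lambda>x. 1 / FF s H x) has_integral T) {c..c+pi}" and big: "pi < sqrt s * T"
  shows "H \<le> 25/2 * s * exp (- (2/3) * sqrt s * T)"
proof -
  have s0: "s \<ge> 0" using s by simp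
  have Tpos: "T > 0"
  proof (rule ccontr)
    assume "\<not> T > 0"
    then have "sqrt s * T \<le> 0" using s by (intro mult_nonneg_nonpos) auto
    then show False using big pi_gt_zero by linarith
  qed
  have cst: "((\<lambda>x. 1 / sqrt (2*H)) has_integral (pi * (1 / sqrt (2*H)))) {c..c+pi}"
    using has_integral_const_real[of "1 / sqrt (2*H)" c "c+pi"] by simp
  have "T \<le> pi * (1 / sqrt (2*H))"
  proof (rule has_integral_le[OF T cst])
    fix x assume "x \<in> {c..c+pi}"
    have "sqrt (2*H) \<le> FF s H x" unfolding FF_def using s0
      by (intro real_sqrt_le_mono) (simp add: mult_nonneg_nonneg)
    moreover have "sqrt (2*H) > 0" using H by simp
    ultimately show "1 / FF s H x \<le> 1 / sqrt (2*H)" by (simp add: frac_le)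
  qed
  then have Tle: "T \<le> pi / sqrt (2*H)" by simp
  have sq2H: "sqrt (2*H) > 0" using H by simp
  have "sqrt s * T \<le> sqrt s * (pi / sqrt (2*H))" using Tle s0 by (intro mult_left_mono) auto
  then have "pi < sqrt s * (pi / sqrt (2*H))" using big by linarith
  then have "sqrt (2*H) < sqrt s" using sq2H pi_gt_zero by (simp add: field_simps)
  then have H2s: "2*H < s" by simp
  define k where "k = sqrt (s/6)"
  have k: "k > 0" unfolding k_def using s by simp
  have kk: "k\<^sup>2 = s/6" unfolding k_def using s by simp
  define P where "P y = ln (k*y + sqrt ((k*y)\<^sup>2 + 2*H))" for y
  have dP: "(P has_real_derivative k / sqrt ((k*y)\<^sup>2 + 2*H)) (at y)" for y
    unfolding P_def by (rule P_deriv[OF k H])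
  define y where "y x = (if c = 0 then x else 2*pi - x)" for x
  have bnd: "1 / FF s H x \<le> 1 / sqrt ((k * y x)\<^sup>2 + 2*H)" if "x \<in> {c..c+pi}" for x
  proof -
    have "(k * y x)\<^sup>2 = s * ((y x)\<^sup>2 / 6)" by (simp add: power_mult_distrib kk)
    also have "\<dots> \<le> s * (2 * (1 - cos x))"
      using one_minus_cos_ge[OF c that] s0 unfolding y_def by (intro mult_left_mono) auto
    finally have "(k * y x)\<^sup>2 + 2*H \<le> 2 * (H + s * (1 - cos x))" by (simp add: algebra_simps)
    then have "sqrt ((k * y x)\<^sup>2 + 2*H) \<le> FF s H x" unfolding FF_def by (rule real_sqrt_le_mono)
    moreover have "sqrt ((k * y x)\<^sup>2 + 2*H) > 0" using H by (simp add: add_nonneg_pos)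
    ultimately show ?thesis by (simp add: frac_le)
  qed
  have G: "((\<lambda>x. 1 / sqrt ((k * y x)\<^sup>2 + 2*H)) has_integral (P pi - P 0) / k) {c..c+pi}"
  proof (cases "c = 0")
    case True
    have "((\<lambda>x. 1 / sqrt ((k * x)\<^sup>2 + 2*H)) has_integral (P pi / k - P 0 / k)) {0..pi}"
    proof (rule fundamental_theorem_of_calculus)
      fix x assume "x \<in> {0..pi}"
      have "((\<lambda>x. P x / k) has_real_derivative (k / sqrt ((k*x)\<^sup>2 + 2*H)) / k) (at x)"
        by (rule DERIV_cdivide[OF dP])
      then show "((\<lambda>x. P x / k) has_vector_derivative 1 / sqrt ((k * x)\<^sup>2 + 2*H)) (at x within {0..pi})"
        using k by (simp add: has_real_derivative_iff_has_vector_derivative[symmetric] has_field_derivative_at_within)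
    qed simp
    then show ?thesis using True unfolding y_def by (simp add: diff_divide_distrib)
  next
    case False
    then have cp: "c = pi" using c by auto
    have "((\<lambda>x. 1 / sqrt ((k * (2*pi - x))\<^sup>2 + 2*H)) has_integral ((- P (2*pi - 2*pi) / k) - (- P (2*pi - pi) / k))) {pi..2*pi}"
    proof (rule fundamental_theorem_of_calculus)
      fix x assume "x \<in> {pi..2*pi}"
      have d1: "((\<lambda>x. 2*pi - x) has_real_derivative -1) (at x)"
        by (auto intro!: derivative_eq_intros)
      have "((\<lambda>x. - P (2*pi - x) / k) has_real_derivative - ((k / sqrt ((k*(2*pi - x))\<^sup>2 + 2*H)) * -1) / k) (at x)"
        by (intro DERIV_cdivide DERIV_minus DERIV_chain2[OF dP d1])
      then show "((\<lambda>x. - P (2*pi - x) / k) has_vector_derivative 1 / sqrt ((k * (2*pi - x))\<^sup>2 + 2*H)) (at x within {pi..2*pi})"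
        using k by (simp add: has_real_derivative_iff_has_vector_derivative[symmetric] has_field_derivative_at_within)
    qed simp
    moreover have "pi + pi = 2 * pi" by simp
    ultimately show ?thesis using cp False unfolding y_def by (simp add: diff_divide_distrib)
  qed
  have TG: "T \<le> (P pi - P 0) / k"
    by (rule has_integral_le[OF T G bnd])
  have P0: "P 0 = ln (sqrt (2*H))" unfolding P_def by simp
  define A where "A = k*pi + sqrt ((k*pi)\<^sup>2 + 2*H)"
  have Ppi: "P pi = ln A" unfolding P_def A_def by simp
  have p: "pi \<le> 3.15" using pi_approx by simp
  have "(k*pi)\<^sup>2 = s/6 * pi\<^sup>2" by (simp add: power_mult_distrib kk)
  also have "\<dots> \<le> s/6 * 3.15\<^sup>2" using p pi_gt3 s by (intro mult_left_mono power_mono) auto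
  also have "\<dots> \<le> 4 * s" using s by (simp add: power2_eq_square)
  finally have kpi: "(k*pi)\<^sup>2 \<le> 4 * s" .
  have "k * pi \<le> sqrt (4 * s)" using kpi k by (metis real_le_rsqrt)
  also have "sqrt (4 * s) = 2 * sqrt s" by (simp add: real_sqrt_mult)
  finally have a1: "k*pi \<le> 2 * sqrt s" .
  have "sqrt ((k*pi)\<^sup>2 + 2*H) \<le> sqrt (9 * s)" using kpi H2s s0 by (intro real_sqrt_le_mono) linarith
  also have "sqrt (9 * s) = 3 * sqrt s" by (simp add: real_sqrt_mult)
  finally have a2: "sqrt ((k*pi)\<^sup>2 + 2*H) \<le> 3 * sqrt s" .
  have A5: "A \<le> 5 * sqrt s" unfolding A_def using a1 a2 by simp
  have Apos: "A > 0" unfolding A_def using k H by (simp add: add_pos_nonneg)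
  have "k * T \<le> ln A - ln (sqrt (2*H))" using TG k P0 Ppi by (simp add: field_simps)
  then have "exp (k*T) \<le> exp (ln A - ln (sqrt (2*H)))" by simp
  also have "\<dots> = A / sqrt (2*H)" using Apos sq2H by (simp add: exp_diff)
  finally have "sqrt (2*H) * exp (k*T) \<le> A" using sq2H by (simp add: field_simps)
  then have "sqrt (2*H) \<le> A * exp (- (k*T))" by (simp add: exp_minus field_simps)
  also have "\<dots> \<le> 5 * sqrt s * exp (- (k*T))" using A5 by simp
  finally have b: "sqrt (2*H) \<le> 5 * sqrt s * exp (- (k*T))" .
  have "2*H = (sqrt (2*H))\<^sup>2" using H by simp
  also have "\<dots> \<le> (5 * sqrt s * exp (- (k*T)))\<^sup>2" using b sq2H by (intro power_mono) auto
  also have "\<dots> = 25 * (sqrt s * sqrt s) * (exp (- (k*T)) * exp (- (k*T)))"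
    by (simp add: power2_eq_square algebra_simps)
  also have "\<dots> = 25 * s * exp (- (2*k*T))"
  proof -
    have ee: "exp (- (k*T)) * exp (- (k*T)) = exp (- (2*k*T))" by (simp add: exp_add[symmetric])
    have ss: "sqrt s * sqrt s = s" using s0 by simp
    show ?thesis unfolding ee ss ..
  qed
  finally have c1: "H \<le> 25/2 * s * exp (- (2*k*T))" by simp
  have "sqrt s / 3 \<le> k" unfolding k_def
  proof -
    have "sqrt s / 3 = sqrt (s/9)" by (simp add: real_sqrt_divide)
    also have "\<dots> \<le> sqrt (s/6)" using s0 by (intro real_sqrt_le_mono) (simp add: frac_le)
    finally show "sqrt s / 3 \<le> sqrt (s/6)" .
  qed
  then have "(2/3) * sqrt s * T \<le> 2*k*T" using Tpos by (simp add: mult_right_mono)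
  then have "exp (- (2*k*T)) \<le> exp (- (2/3) * sqrt s * T)" by simp
  then have "25/2 * s * exp (- (2*k*T)) \<le> 25/2 * s * exp (- (2/3) * sqrt s * T)"
    using s0 by (intro mult_left_mono) auto
  with c1 show ?thesis by linarith
qed



lemma piece:
  fixes q :: "real \<Rightarrow> real"
  assumes s: "s > 0" and ab: "\<alpha> < \<beta>" and cont: "continuous_on {\<alpha>..\<beta>} q"
    and EL: "EL_sol s q \<alpha> \<beta>" and qa: "q \<alpha> = c" and qb: "q \<beta> = c + pi" and c: "c = 0 \<or> c = pi"
  obtains H where "H > 0"
    "((\<lambda>t. lagr s (q t) (deriv q t)) has_integral (integral {c..c+pi} (FF s H) - H*(\<beta>-\<alpha>))) {\<alpha>..\<beta>}"
    "((\<lambda>x. 1 / FF s H x) has_integral (\<beta> - \<alpha>)) {c..c+pi}"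
proof -
  define q' where "q' = deriv q"
  have d1: "(q has_real_derivative q' t) (at t)" if "t \<in> {\<alpha><..<\<beta>}" for t
    using EL that unfolding EL_sol_def q'_def by auto
  have d2: "(q' has_real_derivative s * sin (q t)) (at t)" if "t \<in> {\<alpha><..<\<beta>}" for t
    using EL that unfolding EL_sol_def q'_def by auto
  define E where "E t = (q' t)\<^sup>2 / 2 - s * (1 - cos (q t))" for t
  have "\<exists>H. \<forall>t\<in>{\<alpha><..<\<beta>}. E t = H"
  proof (rule has_field_derivative_zero_constant)
    show "convex {\<alpha><..<\<beta>}" by simp
    fix t assume t: "t \<in> {\<alpha><..<\<beta>}"
    have "(E has_real_derivative (of_nat 2 * q' t ^ (2 - 1) * (s * sin (q t)) / 2 - s * (sin (q t) * q' t))) (at t)"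
      unfolding E_def
      by (rule derivative_eq_intros d1[OF t] d2[OF t] refl | simp)+
    moreover have "of_nat 2 * q' t ^ (2 - 1) * (s * sin (q t)) / 2 - s * (sin (q t) * q' t) = 0"
      by simp
    ultimately show "(E has_field_derivative 0) (at t within {\<alpha><..<\<beta>})"
      by (simp add: has_field_derivative_at_within)
  qed
  then obtain H where EH: "\<And>t. t \<in> {\<alpha><..<\<beta>} \<Longrightarrow> E t = H" by blast
  define u where "u t = 1 - cos (q t)" for t
  have u0: "u t \<ge> 0" for t unfolding u_def by simp
  have ucont: "continuous_on {\<alpha>..\<beta>} u" unfolding u_def by (intro continuous_intros cont)
  have du: "(u has_real_derivative sin (q t) * q' t) (at t)" if t: "t \<in> {\<alpha><..<\<beta>}" for t
    unfolding u_def by (rule derivative_eq_intros d1[OF t] refl | simp)+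
  have q'sq: "(q' t)\<^sup>2 = 2 * (H + s * u t)" if t: "t \<in> {\<alpha><..<\<beta>}" for t
    using EH[OF t] unfolding E_def u_def by simp
  have Hpos: "H > 0"
  proof (rule ccontr)
    assume "\<not> H > 0" hence H0: "H \<le> 0" by simp
    define K where "K = 2 * sqrt s"
    have K0: "K \<ge> 0" unfolding K_def using s by simp
    have bnd: "\<bar>sin (q t) * q' t\<bar> \<le> K * u t" if t: "t \<in> {\<alpha><..<\<beta>}" for t
    proof -
      have e1: "(sin (q t))\<^sup>2 = 1 - (cos (q t))\<^sup>2" by (simp add: sin_squared_eq)
      have e2: "(1 - cos (q t))\<^sup>2 = 1 - 2*cos (q t) + (cos (q t))\<^sup>2" by (simp add: power2_eq_square algebra_simps)
      have e3: "2 * (1 - cos (q t)) - (sin (q t))\<^sup>2 = (1 - cos (q t))\<^sup>2"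
        unfolding e1 by (simp add: power2_eq_square algebra_simps)
      have "0 \<le> (1 - cos (q t))\<^sup>2" by simp
      then have s1: "(sin (q t))\<^sup>2 \<le> 2 * u t" using e3 unfolding u_def by linarith
      have s2: "(q' t)\<^sup>2 \<le> 2 * s * u t" using q'sq[OF t] H0 by simp
      have "(sin (q t) * q' t)\<^sup>2 = (sin (q t))\<^sup>2 * (q' t)\<^sup>2" by (simp add: power_mult_distrib)
      also have "\<dots> \<le> (2 * u t) * (2 * s * u t)" using s1 s2 u0[of t] s by (intro mult_mono) auto
      also have "\<dots> = (K * u t)\<^sup>2" unfolding K_def using s by (simp add: power_mult_distrib power2_eq_square)
      finally have sq: "\<bar>sin (q t) * q' t\<bar>\<^sup>2 \<le> (K * u t)\<^sup>2" by simp
      have "0 \<le> K * u t" using K0 u0[of t] by simp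
      from power2_le_imp_le[OF sq this] show ?thesis .
    qed
    show False
    proof (cases "c = 0")
      case True
      define w where "w t = u t * exp (- K * t)" for t
      have "w \<beta> \<le> w \<alpha>"
      proof (rule DERIV_nonpos_imp_decreasing_open[OF less_imp_le[OF ab]])
        fix t assume "\<alpha> < t" "t < \<beta>"
        then have t: "t \<in> {\<alpha><..<\<beta>}" by simp
        have "(w has_real_derivative (sin (q t) * q' t) * exp (- K * t) + u t * (exp (- K * t) * (- K * 1))) (at t)"
          unfolding w_def by (rule derivative_eq_intros du[OF t] refl | simp)+
        moreover have "(sin (q t) * q' t) * exp (- K * t) + u t * (exp (- K * t) * (- K * 1)) =
            (sin (q t) * q' t - K * u t) * exp (- K * t)" by (simp add: algebra_simps)
        moreover have "sin (q t) * q' t - K * u t \<le> 0" using bnd[OF t] by (simp add: abs_le_iff)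
        then have "(sin (q t) * q' t - K * u t) * exp (- K * t) \<le> 0"
          by (intro mult_nonpos_nonneg) auto
        ultimately show "\<exists>y. (w has_real_derivative y) (at t) \<and> y \<le> 0" by metis
      next
        show "continuous_on {\<alpha>..\<beta>} w" unfolding w_def by (intro continuous_intros ucont)
      qed
      moreover have "w \<alpha> = 0" using qa True unfolding w_def u_def by simp
      moreover have "w \<beta> > 0" using qb True unfolding w_def u_def by simp
      ultimately show False by simp
    next
      case False
      then have cp: "c = pi" using c by simp
      define w where "w t = u t * exp (K * t)" for t
      have "w \<alpha> \<le> w \<beta>"
      proof (rule DERIV_nonneg_imp_increasing_open[OF less_imp_le[OF ab]])
        fix t assume "\<alpha> < t" "t < \<beta>"
        then have t: "t \<in> {\<alpha><..<\<beta>}" by simp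
        have "(w has_real_derivative (sin (q t) * q' t) * exp (K * t) + u t * (exp (K * t) * (K * 1))) (at t)"
          unfolding w_def by (rule derivative_eq_intros du[OF t] refl | simp)+
        moreover have "(sin (q t) * q' t) * exp (K * t) + u t * (exp (K * t) * (K * 1)) =
            (sin (q t) * q' t + K * u t) * exp (K * t)" by (simp add: algebra_simps)
        moreover have "sin (q t) * q' t + K * u t \<ge> 0" using bnd[OF t] by (simp add: abs_le_iff)
        then have "(sin (q t) * q' t + K * u t) * exp (K * t) \<ge> 0"
          by (intro mult_nonneg_nonneg) auto
        ultimately show "\<exists>y. (w has_real_derivative y) (at t) \<and> y \<ge> 0" by metis
      next
        show "continuous_on {\<alpha>..\<beta>} w" unfolding w_def by (intro continuous_intros ucont)
      qed
      moreover have "w \<beta> = 0" using qb cp unfolding w_def u_def by simp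
      moreover have "w \<alpha> > 0" using qa cp unfolding w_def u_def by simp
      ultimately show False by simp
    qed
  qed
  have q'nz: "q' t \<noteq> 0" if t: "t \<in> {\<alpha><..<\<beta>}" for t
  proof
    assume "q' t = 0"
    then have "2 * (H + s * u t) = 0" using q'sq[OF t] by simp
    moreover have "H + s * u t > 0" using Hpos s u0[of t] by (simp add: add_pos_nonneg)
    ultimately show False by simp
  qed
  have q'cont: "continuous_on {\<alpha><..<\<beta>} q'"
    by (rule continuous_at_imp_continuous_on) (use d2 DERIV_isCont in blast)
  have diff: "q differentiable (at x)" if "\<alpha> < x" "x < \<beta>" for x
  proof -
    have "(q has_real_derivative q' x) (at x)" using that by (intro d1) auto
    then show ?thesis unfolding real_differentiable_def by blast
  qed
  obtain l z where z: "\<alpha> < z" "z < \<beta>" "DERIV q z :> l" and lz: "q \<beta> - q \<alpha> = (\<beta> - \<alpha>) * l"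
    using MVT[OF ab cont diff] by blast
  have "l = q' z" using DERIV_unique[OF z(3) d1] z by simp
  moreover have "l > 0"
  proof -
    have "0 < (\<beta> - \<alpha>) * l" using lz qa qb pi_gt_zero by simp
    then show ?thesis using ab by (simp add: zero_less_mult_iff)
  qed
  ultimately have q'z: "q' z > 0" by simp
  have q'pos: "q' t > 0" if t: "t \<in> {\<alpha><..<\<beta>}" for t
  proof (rule ccontr)
    assume "\<not> q' t > 0"
    then have neg: "q' t < 0" using q'nz[OF t] by simp
    show False
    proof (cases "t \<le> z")
      case True
      have "continuous_on {t..z} q'" using t z by (intro continuous_on_subset[OF q'cont]) auto
      from IVT'[of q' t 0 z, OF _ _ True this] neg q'z
      obtain x where "t \<le> x" "x \<le> z" "q' x = 0" by auto
      then show False using q'nz[of x] t z by auto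
    next
      case False
      have "continuous_on {z..t} q'" using t z False by (intro continuous_on_subset[OF q'cont]) auto
      from IVT2'[of q' t 0 z, OF _ _ _ this] neg q'z False
      obtain x where "z \<le> x" "x \<le> t" "q' x = 0" by auto
      then show False using q'nz[of x] t z by auto
    qed
  qed
  have q'F: "q' t = FF s H (q t)" if t: "t \<in> {\<alpha><..<\<beta>}" for t
  proof -
    have "FF s H (q t) = sqrt ((q' t)\<^sup>2)" unfolding FF_def q'sq[OF t] u_def by simp
    then show ?thesis using q'pos[OF t] by simp
  qed
  have img: "q ` {\<alpha>..\<beta>} \<subseteq> {c..c+pi}"
  proof
    fix y assume "y \<in> q ` {\<alpha>..\<beta>}"
    then obtain t where t: "t \<in> {\<alpha>..\<beta>}" "y = q t" by auto
    have dd: "\<exists>y. (q has_real_derivative y) (at x) \<and> y \<ge> 0" if "\<alpha> < x" "x < \<beta>" for x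
    proof -
      have x: "x \<in> {\<alpha><..<\<beta>}" using that by simp
      show ?thesis using d1[OF x] q'pos[OF x] less_imp_le by blast
    qed
    have c1: "continuous_on {\<alpha>..t} q" "continuous_on {t..\<beta>} q"
      using t by (auto intro: continuous_on_subset[OF cont])
    have "q \<alpha> \<le> q t"
      by (rule DERIV_nonneg_imp_increasing_open[OF _ _ c1(1)]) (use t dd in auto)
    moreover have "q t \<le> q \<beta>"
      by (rule DERIV_nonneg_imp_increasing_open[OF _ _ c1(2)]) (use t dd in auto)
    ultimately show "y \<in> {c..c+pi}" using t qa qb by simp
  qed
  have dw: "(q has_field_derivative q' x) (at x within {\<alpha>..\<beta>})" if "x \<in> {\<alpha>..\<beta>} - {\<alpha>, \<beta>}" for x
    using that by (intro has_field_derivative_at_within[OF d1]) auto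
  have empt: "{c+pi..c} = {}" using pi_gt_zero by simp
  have S1: "((\<lambda>x. q' x *\<^sub>R FF s H (q x)) has_integral
      (integral {q \<alpha>..q \<beta>} (FF s H) - integral {q \<beta>..q \<alpha>} (FF s H))) {\<alpha>..\<beta>}"
    by (rule has_integral_substitution_general[where s="{\<alpha>, \<beta>}", OF _ less_imp_le[OF ab] img FF_cont cont dw]) auto
  then have S1': "((\<lambda>x. q' x * FF s H (q x)) has_integral integral {c..c+pi} (FF s H)) {\<alpha>..\<beta>}"
    using qa qb empt by simp
  have cH: "((\<lambda>x. H) has_integral (H * (\<beta> - \<alpha>))) {\<alpha>..\<beta>}"
    using has_integral_const_real[of H \<alpha> \<beta>] ab by (simp add: mult.commute)
  have L: "((\<lambda>t. lagr s (q t) (deriv q t)) has_integral (integral {c..c+pi} (FF s H) - H*(\<beta>-\<alpha>))) {\<alpha>..\<beta>}"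
  proof (rule has_integral_spike_finite[OF _ _ has_integral_diff[OF S1' cH]])
    show "finite {\<alpha>, \<beta>}" by simp
    fix x assume "x \<in> {\<alpha>..\<beta>} - {\<alpha>, \<beta>}"
    then have x: "x \<in> {\<alpha><..<\<beta>}" by auto
    have "q' x * FF s H (q x) = (q' x)\<^sup>2" using q'F[OF x] by (simp add: power2_eq_square)
    then show "lagr s (q x) (deriv q x) = q' x * FF s H (q x) - H"
      unfolding lagr_def q'_def[symmetric] using q'sq[OF x] unfolding u_def by simp
  qed
  have S2: "((\<lambda>x. q' x *\<^sub>R (1 / FF s H (q x))) has_integral
      (integral {q \<alpha>..q \<beta>} (\<lambda>x. 1 / FF s H x) - integral {q \<beta>..q \<alpha>} (\<lambda>x. 1 / FF s H x))) {\<alpha>..\<beta>}"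
    by (rule has_integral_substitution_general[where s="{\<alpha>, \<beta>}", OF _ less_imp_le[OF ab] img FF_inv_cont[OF _ Hpos] cont dw])
       (use s in auto)
  then have S2': "((\<lambda>x. q' x * (1 / FF s H (q x))) has_integral integral {c..c+pi} (\<lambda>x. 1 / FF s H x)) {\<alpha>..\<beta>}"
    using qa qb empt by simp
  have one: "((\<lambda>x. 1) has_integral integral {c..c+pi} (\<lambda>x. 1 / FF s H x)) {\<alpha>..\<beta>}"
  proof (rule has_integral_spike_finite[OF _ _ S2'])
    show "finite {\<alpha>, \<beta>}" by simp
    fix x assume "x \<in> {\<alpha>..\<beta>} - {\<alpha>, \<beta>}"
    then have x: "x \<in> {\<alpha><..<\<beta>}" by auto
    show "(1::real) = q' x * (1 / FF s H (q x))" using q'F[OF x] q'pos[OF x] by simp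
  qed
  have one': "((\<lambda>x. 1::real) has_integral (\<beta> - \<alpha>)) {\<alpha>..\<beta>}"
    using has_integral_const_real[of "1::real" \<alpha> \<beta>] ab by simp
  have "integral {c..c+pi} (\<lambda>x. 1 / FF s H x) = \<beta> - \<alpha>" using has_integral_unique[OF one one'] .
  moreover have "((\<lambda>x. 1 / FF s H x) has_integral integral {c..c+pi} (\<lambda>x. 1 / FF s H x)) {c..c+pi}"
    using s Hpos by (intro integrable_integral integrable_continuous_real FF_inv_cont) auto
  ultimately have Tint: "((\<lambda>x. 1 / FF s H x) has_integral (\<beta> - \<alpha>)) {c..c+pi}" by simp
  show ?thesis using that[OF Hpos L Tint] .
qed



lemma Hbound:
  assumes s: "s > 0" and H: "H > 0" and c: "c = 0 \<or> c = pi"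
    and T: "((\<lambda>x. 1 / FF s H x) has_integral T) {c..c+pi}" and Tp: "T > 0"
    and om: "\<bar>pi / T\<bar> \<le> \<omega>" and sm: "\<omega> < sqrt s"
  shows "H \<le> 25/2 * s * exp (- 2 * sqrt s / \<omega>)"
proof -
  have pT: "pi / T > 0" using Tp by simp
  then have om': "pi / T \<le> \<omega>" using om Tp by simp
  then have wpos: "\<omega> > 0" using pT by linarith
  have piw: "pi \<le> \<omega> * T" using om' Tp by (simp add: divide_le_eq mult.commute)
  have "\<omega> * T < sqrt s * T" using sm Tp by simp
  then have big: "pi < sqrt s * T" using piw by linarith
  have H1: "H \<le> 25/2 * s * exp (- (2/3) * sqrt s * T)" by (rule expbound[OF s H c T big])
  have "3 \<le> \<omega> * T" using piw pi_gt3 by linarith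
  then have "3 / \<omega> \<le> T" using wpos by (simp add: divide_le_eq mult.commute)
  then have "sqrt s * (3 / \<omega>) \<le> sqrt s * T" using s by (intro mult_left_mono) auto
  then have "2 * sqrt s / \<omega> \<le> (2/3) * sqrt s * T" by simp
  then have "exp (- (2/3) * sqrt s * T) \<le> exp (- 2 * sqrt s / \<omega>)" by simp
  then have "25/2 * s * exp (- (2/3) * sqrt s * T) \<le> 25/2 * s * exp (- 2 * sqrt s / \<omega>)"
    using s by (intro mult_left_mono) auto
  with H1 show ?thesis by linarith
qed

lemma core:
  fixes a \<epsilon> :: real and n :: nat and qb qt :: "real \<Rightarrow> real"
  assumes a: "a > 0" and e: "\<epsilon> > 0" and n: "n \<ge> 1"
    and o1: "t0 < t1b" and o2: "t1b < t2" and o3: "t0 < t1t" and o4: "t1t < t2"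
    and cb: "continuous_on {t0..t2} qb"
    and Eb1: "EL_sol (sigma a n) qb t0 t1b" and Eb2: "EL_sol (sigma a n) qb t1b t2"
    and b0: "qb t0 = 0" and b1: "qb t1b = pi" and b2: "qb t2 = 2 * pi"
    and ct: "continuous_on {t0..t2} qt"
    and Et1: "EL_sol (sigma a n) qt t0 t1t" and Et2: "EL_sol (sigma a n) qt t1t t2"
    and d0: "qt t0 = 0" and d1: "qt t1t = pi" and d2: "qt t2 = 2 * pi"
    and om: "\<omega> = Max {\<bar>pi / (t1b - t0)\<bar>, \<bar>pi / (t2 - t1b)\<bar>, \<bar>pi / (t1t - t0)\<bar>, \<bar>pi / (t2 - t1t)\<bar>}"
    and sm: "\<omega> < real n powr (- a / 2 - \<epsilon>)"
  shows "\<bar>action (sigma a n) qb t0 t2 - action (sigma a n) qt t0 t2\<bar>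
          \<le> 25 * \<bar>t1b - t1t\<bar> * sigma a n * exp (- 2 * sqrt (sigma a n) / \<omega>)"
proof -
  define s where "s = sigma a n"
  have npos: "real n > 0" using n by simp
  have s: "s > 0" unfolding s_def sigma_def using npos by simp
  have s0: "s \<ge> 0" using s by simp
  have "sqrt s = s powr (1/2)" using s by (simp add: powr_half_sqrt)
  also have "\<dots> = real n powr (- a / 2)" unfolding s_def sigma_def using npos by (simp add: powr_powr)
  finally have sqs: "sqrt s = real n powr (- a / 2)" .
  have "real n powr (- a / 2 - \<epsilon>) = real n powr (- a / 2) * real n powr (- \<epsilon>)"
    using npos by (simp add: powr_add[symmetric])
  also have "\<dots> \<le> real n powr (- a / 2) * 1"
  proof (rule mult_left_mono)
    have "real n powr (- \<epsilon>) \<le> real n powr 0" using n e by (intro powr_mono) auto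
    then show "real n powr (- \<epsilon>) \<le> 1" using npos by simp
  qed simp
  finally have wsm: "\<omega> < sqrt s" using sm sqs by simp
  have fin: "finite {\<bar>pi / (t1b - t0)\<bar>, \<bar>pi / (t2 - t1b)\<bar>, \<bar>pi / (t1t - t0)\<bar>, \<bar>pi / (t2 - t1t)\<bar>}" by simp
  have w1: "\<bar>pi / (t1b - t0)\<bar> \<le> \<omega>" unfolding om by (rule Max_ge[OF fin]) simp
  have w2: "\<bar>pi / (t2 - t1b)\<bar> \<le> \<omega>" unfolding om by (rule Max_ge[OF fin]) simp
  have w3: "\<bar>pi / (t1t - t0)\<bar> \<le> \<omega>" unfolding om by (rule Max_ge[OF fin]) simp
  have w4: "\<bar>pi / (t2 - t1t)\<bar> \<le> \<omega>" unfolding om by (rule Max_ge[OF fin]) simp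
  define B where "B = 25/2 * s * exp (- 2 * sqrt s / \<omega>)"
  have pi2: "2 * pi = pi + pi" by simp
  have c0: "(0::real) = 0 \<or> (0::real) = pi" by simp
  have cp: "pi = 0 \<or> pi = pi" by simp
  have cb1: "continuous_on {t0..t1b} qb" using o2 by (intro continuous_on_subset[OF cb]) auto
  have cb2: "continuous_on {t1b..t2} qb" using o1 by (intro continuous_on_subset[OF cb]) auto
  have ct1: "continuous_on {t0..t1t} qt" using o4 by (intro continuous_on_subset[OF ct]) auto
  have ct2: "continuous_on {t1t..t2} qt" using o3 by (intro continuous_on_subset[OF ct]) auto
  have b1': "qb t1b = 0 + pi" using b1 by simp
  have d1': "qt t1t = 0 + pi" using d1 by simp
  have b2': "qb t2 = pi + pi" using b2 by simp
  have d2': "qt t2 = pi + pi" using d2 by simp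
  have Eb1': "EL_sol s qb t0 t1b" using Eb1 unfolding s_def .
  have Eb2': "EL_sol s qb t1b t2" using Eb2 unfolding s_def .
  have Et1': "EL_sol s qt t0 t1t" using Et1 unfolding s_def .
  have Et2': "EL_sol s qt t1t t2" using Et2 unfolding s_def .
  obtain Hb1 where Hb1: "Hb1 > 0"
    "((\<lambda>t. lagr s (qb t) (deriv qb t)) has_integral (integral {0..0+pi} (FF s Hb1) - Hb1*(t1b-t0))) {t0..t1b}"
    "((\<lambda>x. 1 / FF s Hb1 x) has_integral (t1b - t0)) {0..0+pi}"
    by (rule piece[OF s o1 cb1 Eb1' b0 b1' c0])
  obtain Hb2 where Hb2: "Hb2 > 0"
    "((\<lambda>t. lagr s (qb t) (deriv qb t)) has_integral (integral {pi..pi+pi} (FF s Hb2) - Hb2*(t2-t1b))) {t1b..t2}"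
    "((\<lambda>x. 1 / FF s Hb2 x) has_integral (t2 - t1b)) {pi..pi+pi}"
    by (rule piece[OF s o2 cb2 Eb2' b1 b2' cp])
  obtain Ht1 where Ht1: "Ht1 > 0"
    "((\<lambda>t. lagr s (qt t) (deriv qt t)) has_integral (integral {0..0+pi} (FF s Ht1) - Ht1*(t1t-t0))) {t0..t1t}"
    "((\<lambda>x. 1 / FF s Ht1 x) has_integral (t1t - t0)) {0..0+pi}"
    by (rule piece[OF s o3 ct1 Et1' d0 d1' c0])
  obtain Ht2 where Ht2: "Ht2 > 0"
    "((\<lambda>t. lagr s (qt t) (deriv qt t)) has_integral (integral {pi..pi+pi} (FF s Ht2) - Ht2*(t2-t1t))) {t1t..t2}"
    "((\<lambda>x. 1 / FF s Ht2 x) has_integral (t2 - t1t)) {pi..pi+pi}"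
    by (rule piece[OF s o4 ct2 Et2' d1 d2' cp])
  have Ab: "action s qb t0 t2 = (integral {0..0+pi} (FF s Hb1) - Hb1*(t1b-t0)) + (integral {pi..pi+pi} (FF s Hb2) - Hb2*(t2-t1b))"
    unfolding action_def
    by (rule integral_unique, rule has_integral_combine[OF less_imp_le[OF o1] less_imp_le[OF o2] Hb1(2) Hb2(2)])
  have At: "action s qt t0 t2 = (integral {0..0+pi} (FF s Ht1) - Ht1*(t1t-t0)) + (integral {pi..pi+pi} (FF s Ht2) - Ht2*(t2-t1t))"
    unfolding action_def
    by (rule integral_unique, rule has_integral_combine[OF less_imp_le[OF o3] less_imp_le[OF o4] Ht1(2) Ht2(2)])
  have P1: "\<bar>(integral {0..0+pi} (FF s Hb1) - Hb1*(t1b-t0)) - (integral {0..0+pi} (FF s Ht1) - Ht1*(t1t-t0))\<bar>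
      \<le> max Hb1 Ht1 * \<bar>(t1b-t0) - (t1t-t0)\<bar>"
    by (rule pair_bound[OF s0 Hb1(1) Ht1(1) _ integral_unique[OF Hb1(3), symmetric] integral_unique[OF Ht1(3), symmetric]]) (use pi_gt_zero in linarith)
  have P2: "\<bar>(integral {pi..pi+pi} (FF s Hb2) - Hb2*(t2-t1b)) - (integral {pi..pi+pi} (FF s Ht2) - Ht2*(t2-t1t))\<bar>
      \<le> max Hb2 Ht2 * \<bar>(t2-t1b) - (t2-t1t)\<bar>"
    by (rule pair_bound[OF s0 Hb2(1) Ht2(1) _ integral_unique[OF Hb2(3), symmetric] integral_unique[OF Ht2(3), symmetric]]) (use pi_gt_zero in linarith)
  have hb1: "Hb1 \<le> B" unfolding B_def by (rule Hbound[OF s Hb1(1) c0 Hb1(3) _ w1 wsm]) (use o1 in simp)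
  have hb2: "Hb2 \<le> B" unfolding B_def by (rule Hbound[OF s Hb2(1) cp Hb2(3) _ w2 wsm]) (use o2 in simp)
  have ht1: "Ht1 \<le> B" unfolding B_def by (rule Hbound[OF s Ht1(1) c0 Ht1(3) _ w3 wsm]) (use o3 in simp)
  have ht2: "Ht2 \<le> B" unfolding B_def by (rule Hbound[OF s Ht2(1) cp Ht2(3) _ w4 wsm]) (use o4 in simp)
  have m1: "max Hb1 Ht1 * \<bar>t1b - t1t\<bar> \<le> B * \<bar>t1b - t1t\<bar>" using hb1 ht1 by (intro mult_right_mono) auto
  have m2: "max Hb2 Ht2 * \<bar>t1b - t1t\<bar> \<le> B * \<bar>t1b - t1t\<bar>" using hb2 ht2 by (intro mult_right_mono) auto
  have e1: "\<bar>(t1b-t0) - (t1t-t0)\<bar> = \<bar>t1b - t1t\<bar>" by simp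
  have e2: "\<bar>(t2-t1b) - (t2-t1t)\<bar> = \<bar>t1b - t1t\<bar>" by (simp add: abs_minus_commute)
  define D1 where "D1 = (integral {0..0+pi} (FF s Hb1) - Hb1*(t1b-t0)) - (integral {0..0+pi} (FF s Ht1) - Ht1*(t1t-t0))"
  define D2 where "D2 = (integral {pi..pi+pi} (FF s Hb2) - Hb2*(t2-t1b)) - (integral {pi..pi+pi} (FF s Ht2) - Ht2*(t2-t1t))"
  have "action s qb t0 t2 - action s qt t0 t2 = D1 + D2" unfolding Ab At D1_def D2_def by linarith
  then have "\<bar>action s qb t0 t2 - action s qt t0 t2\<bar> \<le> \<bar>D1\<bar> + \<bar>D2\<bar>" using abs_triangle_ineq by simp
  moreover have "\<bar>D1\<bar> \<le> B * \<bar>t1b - t1t\<bar>" using P1[unfolded e1] m1 unfolding D1_def by linarith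
  moreover have "\<bar>D2\<bar> \<le> B * \<bar>t1b - t1t\<bar>" using P2[unfolded e2] m2 unfolding D2_def by linarith
  ultimately have "\<bar>action s qb t0 t2 - action s qt t0 t2\<bar> \<le> 2 * B * \<bar>t1b - t1t\<bar>" by linarith
  also have "2 * B * \<bar>t1b - t1t\<bar> = 25 * \<bar>t1b - t1t\<bar> * s * exp (- 2 * sqrt s / \<omega>)"
    unfolding B_def by simp
  finally show ?thesis unfolding s_def .
qed


theorem lemma2p3:
  fixes a \<epsilon> :: real
  assumes "a > 0" and "\<epsilon> > 0"
  shows "\<exists>C1>0. \<exists>C2>0. \<forall>(n::nat) t0 t2 t1b t1t (qb::real\<Rightarrow>real) (qt::real\<Rightarrow>real).
    n \<ge> 1 \<longrightarrow> t0 < t1b \<longrightarrow> t1b < t2 \<longrightarrow> t0 < t1t \<longrightarrow> t1t < t2 \<longrightarrow>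
    continuous_on {t0..t2} qb \<longrightarrow>
    EL_sol (sigma a n) qb t0 t1b \<longrightarrow> EL_sol (sigma a n) qb t1b t2 \<longrightarrow>
    qb t0 = 0 \<longrightarrow> qb t1b = pi \<longrightarrow> qb t2 = 2 * pi \<longrightarrow>
    continuous_on {t0..t2} qt \<longrightarrow>
    EL_sol (sigma a n) qt t0 t1t \<longrightarrow> EL_sol (sigma a n) qt t1t t2 \<longrightarrow>
    qt t0 = 0 \<longrightarrow> qt t1t = pi \<longrightarrow> qt t2 = 2 * pi \<longrightarrow>
    (let \<omega> = Max {\<bar>pi / (t1b - t0)\<bar>, \<bar>pi / (t2 - t1b)\<bar>,
                   \<bar>pi / (t1t - t0)\<bar>, \<bar>pi / (t2 - t1t)\<bar>}
     in \<omega> < real n powr (- a / 2 - \<epsilon>) \<longrightarrow>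
        \<bar>action (sigma a n) qb t0 t2 - action (sigma a n) qt t0 t2\<bar>
          \<le> C1 * \<bar>t1b - t1t\<bar> * sigma a n * exp (- C2 * sqrt (sigma a n) / \<omega>))"
    apply (rule exI[of _ "25::real"], rule conjI, simp)
  apply (rule exI[of _ "2::real"], rule conjI, simp)
  apply (intro allI impI)
  apply (unfold Let_def)
  apply (intro impI)
  apply (rule core[OF assms])
                      apply (assumption | rule refl)+
  done

end
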